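(* Let $P$ be a distribution on $\mathcal{Z}$, $h$ a fixed model, $\ell\ge0$ a loss with $C=\sup_{z\in\mathcal{Z}}\ell(h,z)<\infty$, $S$ a set of $n$ i.i.d. samples from $P$, and $\mathcal{Z}_1,\dots,\mathcal{Z}_K$ a partition of $\mathcal{Z}$ into disjoint nonempty measurable sets. Let $p_i=P(\mathcal{Z}_i)$ and, for a constant $\gamma\ge1$, $u=\sum_{i=1}^K\gamma np_i(1+\gamma np_i)$. For any constants $\gamma\ge1$, $\delta_1\ge\exp\!\big(-\frac{u\ln\gamma}{4n-3}\big)$ and $\delta_2>0$, with probability at least $1-\delta_1-\delta_2$, $$F(P,h)\le F(S,h)+C\sqrt{\frac{u}{2n^2}\ln\frac1{\delta_1}}+g(\delta_2).$$
   Context: $F(P,h)=\mathbb{E}_{z\sim P}[\ell(h,z)]$, $F(S,h)=\frac1n\sum_{z\in S}\ell(h,z)$. $S_i=S\cap\mathcal{Z}_i$, $n_i=|S_i|$, $T=\{i\in[K]:S\cap\mathcal{Z}_i\ne\emptyset\}$, and $g(\delta)=C(\sqrt2+1)\sqrt{\frac{|T|\ln(2K/\delta)}{n}}+\frac{2C|T|\ln(2K/\delta)}{n}$. *)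

theory Defs
  imports "HOL-Probability.Probability"
begin

definition pop_risk :: "'z measure \<Rightarrow> ('h \<Rightarrow> 'z \<Rightarrow> real) \<Rightarrow> 'h \<Rightarrow> real" where
  "pop_risk P loss h = (\<integral>z. loss h z \<partial>P)"

definition emp_risk :: "nat \<Rightarrow> (nat \<Rightarrow> 'z) \<Rightarrow> ('h \<Rightarrow> 'z \<Rightarrow> real) \<Rightarrow> 'h \<Rightarrow> real" where
  "emp_risk n s loss h = (1 / real n) * (\<Sum>j<n. loss h (s j))"

definition hit_cells :: "nat \<Rightarrow> (nat \<Rightarrow> 'z) \<Rightarrow> nat \<Rightarrow> (nat \<Rightarrow> 'z set) \<Rightarrow> nat set" where
  "hit_cells n s K Zs = {i \<in> {1..K}. \<exists>j<n. s j \<in> Zs i}"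

definition g_bound :: "real \<Rightarrow> nat \<Rightarrow> nat \<Rightarrow> nat \<Rightarrow> real \<Rightarrow> real" where
  "g_bound C K n t \<delta> =
     C * (sqrt 2 + 1) * sqrt (real t * ln (2 * real K / \<delta>) / real n)
     + 2 * C * real t * ln (2 * real K / \<delta>) / real n"

end

theory Submission
  imports Defs
begin

lemma indep_coords:
  assumes P: "prob_space P" and I: "I \<noteq> {}"
  shows "prob_space.indep_vars (PiM I (\<lambda>_. P)) (\<lambda>_. P) (\<lambda>i x. x i) I"
proof -
  interpret pp: product_prob_space "\<lambda>_. P"
    by (simp add: P product_prob_space_def product_prob_space_axioms_def product_sigma_finite_def prob_space_imp_sigma_finite)
  have ps: "prob_space (PiM I (\<lambda>_. P))"
    by (rule prob_space_PiM) (simp add: P)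
  have L: "distr (PiM I (\<lambda>_. P)) (PiM I (\<lambda>_. P)) (\<lambda>x. \<lambda>i\<in>I. x i) = PiM I (\<lambda>_. P)"
  proof -
    have "distr (PiM I (\<lambda>_. P)) (PiM I (\<lambda>_. P)) (\<lambda>x. \<lambda>i\<in>I. x i) = distr (PiM I (\<lambda>_. P)) (PiM I (\<lambda>_. P)) (\<lambda>x. x)"
      by (rule distr_cong) (auto simp: space_PiM PiE_def extensional_restrict)
    also have "\<dots> = PiM I (\<lambda>_. P)" by (rule distr_id)
    finally show ?thesis .
  qed
  have R: "PiM I (\<lambda>i. distr (PiM I (\<lambda>_. P)) P (\<lambda>x. x i)) = PiM I (\<lambda>_. P)"
    by (rule PiM_cong) (auto intro: distr_PiM_component P)
  show ?thesis
    by (subst prob_space.indep_vars_iff_distr_eq_PiM'[OF ps I]) (auto simp: L R)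
qed
theorem theorem3:
  fixes P :: "'z measure" and loss :: "'h \<Rightarrow> 'z \<Rightarrow> real" and h :: 'h
    and n K :: nat and Zs :: "nat \<Rightarrow> 'z set" and \<gamma> \<delta>1 \<delta>2 :: real
  assumes "prob_space P"
    and nonneg: "\<forall>h'. \<forall>z\<in>space P. loss h' z \<ge> 0"
    and meas: "loss h \<in> borel_measurable P"
    and bdd: "bdd_above (loss h ` space P)"
    and n_pos: "n \<ge> 1"
    and part_meas: "\<forall>i\<in>{1..K}. Zs i \<in> sets P"
    and part_ne: "\<forall>i\<in>{1..K}. Zs i \<noteq> {}"
    and part_disj: "\<forall>i\<in>{1..K}. \<forall>j\<in>{1..K}. i \<noteq> j \<longrightarrow> Zs i \<inter> Zs j = {}"
    and part_cover: "(\<Union>i\<in>{1..K}. Zs i) = space P"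
    and gamma: "\<gamma> \<ge> 1"
    and delta1: "\<delta>1 \<ge> exp (- ((\<Sum>i=1..K. \<gamma> * real n * measure P (Zs i)
                                       * (1 + \<gamma> * real n * measure P (Zs i))) * ln \<gamma>
                                    / (4 * real n - 3)))"
    and delta2: "\<delta>2 > 0"
  shows "prob_space.prob (Pi\<^sub>M {..<n} (\<lambda>_. P))
           {s \<in> space (Pi\<^sub>M {..<n} (\<lambda>_. P)).
              pop_risk P loss h
              \<le> emp_risk n s loss h
                 + (SUP z\<in>space P. loss h z)
                   * sqrt ((\<Sum>i=1..K. \<gamma> * real n * measure P (Zs i)
                                       * (1 + \<gamma> * real n * measure P (Zs i)))
                           / (2 * real n ^ 2) * ln (1 / \<delta>1))
                 + g_bound (SUP z\<in>space P. loss h z) K n (card (hit_cells n s K Zs)) \<delta>2}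
         \<ge> 1 - \<delta>1 - \<delta>2"
proof -
  interpret P: prob_space P by fact
  define M where "M = PiM {..<n} (\<lambda>_. P)"
  define C where "C = (SUP z\<in>space P. loss h z)"
  define u where "u = (\<Sum>i=1..K. \<gamma> * real n * measure P (Zs i) * (1 + \<gamma> * real n * measure P (Zs i)))"
  define E where "E = {s \<in> space M. pop_risk P loss h \<le> emp_risk n s loss h + C * sqrt (u / (2 * real n ^ 2) * ln (1 / \<delta>1))
                 + g_bound C K n (card (hit_cells n s K Zs)) \<delta>2}"
  have MP: "prob_space M" unfolding M_def by (rule prob_space_PiM) (simp add: P.prob_space_axioms)
  interpret M: prob_space M by (rule MP)
  have sp: "space P \<noteq> {}" by (rule P.not_empty)
  have le_C: "loss h z \<le> C" if "z \<in> space P" for z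
    unfolding C_def using bdd that by (rule cSUP_upper2) simp
  have C_nn: "C \<ge> 0" using sp nonneg le_C by (meson equals0I order_trans)
  have K1: "K \<ge> 1" using sp part_cover by auto
  have d1pos: "\<delta>1 > 0" using delta1 by (meson exp_gt_zero less_le_trans)
  have goal_eq: "?thesis \<longleftrightarrow> M.prob E \<ge> 1 - \<delta>1 - \<delta>2"
    unfolding E_def M_def C_def u_def by simp
  have comp_m[measurable]: "(\<lambda>s. s j) \<in> measurable M P" if "j < n" for j
    unfolding M_def using that by (intro measurable_component_singleton) auto
  have Xm[measurable]: "(\<lambda>s. loss h (s j)) \<in> borel_measurable M" if "j < n" for j
    using comp_m[OF that] meas by (rule measurable_compose)
  have emp_m: "(\<lambda>s. emp_risk n s loss h) \<in> borel_measurable M"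
    unfolding emp_risk_def by (intro borel_measurable_times borel_measurable_const borel_measurable_sum Xm) auto
  have card_eq: "real (card (hit_cells n s K Zs)) = (\<Sum>i\<in>{1..K}. if (\<exists>j\<in>{..<n}. s j \<in> Zs i) then 1 else 0)" for s
    unfolding hit_cells_def Bex_def lessThan_iff by (simp add: sum.If_cases Int_def conj_commute)
  have pred_i: "Measurable.pred M (\<lambda>s. \<exists>j\<in>{..<n}. s j \<in> Zs i)" if "i \<in> {1..K}" for i
  proof -
    show "Measurable.pred M (\<lambda>s. \<exists>j\<in>{..<n}. s j \<in> Zs i)"
    proof (rule pred_intros_finite)
      fix j assume "j \<in> {..<n}"
      then have jn: "j < n" by simp
      have Zm: "Zs i \<in> sets P" using part_meas that by blast
      show "Measurable.pred M (\<lambda>s. s j \<in> Zs i)"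
        by (rule pred_sets2[OF Zm comp_m[OF jn]])
    qed simp
  qed
  have card_m: "(\<lambda>s. real (card (hit_cells n s K Zs))) \<in> borel_measurable M"
  proof -
    have "(\<lambda>s. if (\<exists>j\<in>{..<n}. s j \<in> Zs i) then 1 else 0 :: real) \<in> borel_measurable M" if "i \<in> {1..K}" for i
      using pred_i[OF that] unfolding pred_def by - (rule measurable_If, simp_all)
    then have "(\<lambda>s. \<Sum>i\<in>{1..K}. if (\<exists>j\<in>{..<n}. s j \<in> Zs i) then 1 else 0 :: real) \<in> borel_measurable M"
      by (rule borel_measurable_sum)
    then show ?thesis unfolding card_eq .
  qed
  have E_m: "E \<in> sets M"
  proof -
    have "(\<lambda>s. g_bound C K n (card (hit_cells n s K Zs)) \<delta>2) \<in> borel_measurable M"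
      unfolding g_bound_def using card_m
      by (intro borel_measurable_add borel_measurable_times borel_measurable_divide borel_measurable_const borel_measurable_sqrt) auto
    then have "(\<lambda>s. emp_risk n s loss h + C * sqrt (u / (2 * real n ^ 2) * ln (1 / \<delta>1))
                 + g_bound C K n (card (hit_cells n s K Zs)) \<delta>2) \<in> borel_measurable M"
      using emp_m by (intro borel_measurable_add borel_measurable_const)
    then show ?thesis unfolding E_def
      using borel_measurable_le[OF borel_measurable_const] by blast
  qed
  show ?thesis
  proof (cases "\<delta>1 + \<delta>2 \<ge> 1")
    case True
    then show ?thesis unfolding goal_eq using measure_nonneg[of M E] by linarith
  next
    case False
    then have d1lt: "\<delta>1 < 1" and d2lt: "\<delta>2 < 1" using delta2 d1pos by linarith+
    have lnd1: "ln (1 / \<delta>1) \<ge> 0" using d1pos d1lt by simp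
    have lnd2: "ln (2 * real K / \<delta>2) \<ge> 0"
    proof -
      have "1 \<le> 2 * real K / \<delta>2" using K1 delta2 d2lt by (simp add: field_simps)
      then show ?thesis by simp
    qed
    have g_nn: "g_bound C K n t \<delta>2 \<ge> 0" for t
      unfolding g_bound_def using C_nn lnd2 n_pos by (intro add_nonneg_nonneg mult_nonneg_nonneg divide_nonneg_nonneg) auto
    have sumP: "(\<Sum>i=1..K. measure P (Zs i)) = 1"
    proof -
      have "measure P (\<Union>i\<in>{1..K}. Zs i) = (\<Sum>i=1..K. measure P (Zs i))"
        using part_meas part_disj by (intro P.finite_measure_finite_Union) (auto simp: disjoint_family_on_def)
      then show ?thesis using part_cover P.prob_space by simp
    qed
    have u_ge: "u \<ge> real n"
    proof -
      have "real n * measure P (Zs i) \<le> \<gamma> * real n * measure P (Zs i) * (1 + \<gamma> * real n * measure P (Zs i))" for i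
      proof -
        have p0: "measure P (Zs i) \<ge> 0" by simp
        have a: "real n * measure P (Zs i) \<le> \<gamma> * real n * measure P (Zs i)"
          using gamma p0 mult_right_mono[of 1 \<gamma> "real n * measure P (Zs i)"] by (simp add: mult.assoc)
        have "\<gamma> * real n * measure P (Zs i) * 1 \<le> \<gamma> * real n * measure P (Zs i) * (1 + \<gamma> * real n * measure P (Zs i))"
          using gamma p0 by (intro mult_left_mono) auto
        with a show ?thesis by simp
      qed
      then have "(\<Sum>i=1..K. real n * measure P (Zs i)) \<le> u" unfolding u_def by (rule sum_mono)
      then show ?thesis by (metis sum_distrib_left sumP mult.right_neutral)
    qed
    have sq_le: "C * sqrt (ln (1 / \<delta>1) / (2 * real n)) \<le> C * sqrt (u / (2 * real n ^ 2) * ln (1 / \<delta>1))"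
    proof (intro mult_left_mono real_sqrt_le_mono C_nn)
      have "1 / (2 * real n) \<le> u / (2 * real n ^ 2)"
        using u_ge n_pos by (simp add: field_simps power2_eq_square)
      then show "ln (1 / \<delta>1) / (2 * real n) \<le> u / (2 * real n ^ 2) * ln (1 / \<delta>1)"
        using lnd1 mult_right_mono[of "1 / (2 * real n)" "u / (2 * real n ^ 2)" "ln (1 / \<delta>1)"] by simp
    qed
    have sj: "s j \<in> space P" if "s \<in> space M" "j < n" for s j
      using that unfolding M_def by (auto simp: space_PiM)
    have emp_nn: "emp_risk n s loss h \<ge> 0" if "s \<in> space M" for s
      unfolding emp_risk_def using nonneg sj[OF that] by (intro mult_nonneg_nonneg sum_nonneg) auto
    have expX: "M.expectation (\<lambda>s. loss h (s j)) = pop_risk P loss h" if "j < n" for j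
    proof -
      have "M.expectation (\<lambda>s. loss h (s j)) = integral\<^sup>L (distr M P (\<lambda>s. s j)) (loss h)"
        by (rule integral_distr[symmetric, OF comp_m[OF that] meas])
      also have "distr M P (\<lambda>s. s j) = P" unfolding M_def
        by (rule distr_PiM_component) (use that P.prob_space_axioms in auto)
      finally show ?thesis unfolding pop_risk_def .
    qed
    show ?thesis
    proof (cases "C = 0")
      case True
      have l0: "loss h z = 0" if "z \<in> space P" for z 
      proof -
        have "0 \<le> loss h z" using nonneg that by blast
        then show ?thesis using le_C[OF that] True by linarith
      qed
      have "pop_risk P loss h = 0" unfolding pop_risk_def
      proof -
        have "(\<integral>z. loss h z \<partial>P) = (\<integral>z. 0 \<partial>P)"
          by (rule Bochner_Integration.integral_cong) (auto simp: l0)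
        then show "(\<integral>z. loss h z \<partial>P) = 0" by simp
      qed
      then have "E = space M" unfolding E_def using emp_nn g_nn True by fastforce
      then show ?thesis unfolding goal_eq using M.prob_space delta2 d1pos by simp
    next
      case False
      then have Cpos: "C > 0" using C_nn by simp
      define \<mu> where "\<mu> = (\<Sum>j\<in>{..<n}. M.expectation (\<lambda>s. loss h (s j)))"
      interpret H: Hoeffding_ineq M "{..<n}" "\<lambda>j s. loss h (s j)" "\<lambda>_. 0" "\<lambda>_. C" \<mu>
      proof unfold_locales
        show "finite {..<n}" by simp
        show "M.indep_vars (\<lambda>_. borel) (\<lambda>j s. loss h (s j)) {..<n}"
          using M.indep_vars_compose2[OF indep_coords[OF P.prob_space_axioms, of "{..<n}", folded M_def], of "\<lambda>_. loss h" "\<lambda>_. borel"]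
            meas n_pos by (metis lessThan_empty_iff not_one_le_zero)
        fix j assume "j \<in> {..<n}"
        then show "AE x in M. loss h (x j) \<in> {0..C}"
          using sj nonneg le_C by (intro AE_I2) auto
      qed (simp add: \<mu>_def)
      define \<epsilon> where "\<epsilon> = real n * C * sqrt (ln (1 / \<delta>1) / (2 * real n))"
      have eps_nn: "\<epsilon> \<ge> 0" unfolding \<epsilon>_def using C_nn lnd1 by simp
      define B where "B = {x \<in> space M. (\<Sum>j\<in>{..<n}. loss h (x j)) \<le> \<mu> - \<epsilon>}"
      have sumsq: "(\<Sum>j\<in>{..<n}. (C - 0)\<^sup>2) = real n * C\<^sup>2" by simp
      have "M.prob B \<le> exp (-2 * \<epsilon>\<^sup>2 / (\<Sum>j\<in>{..<n}. (C - 0)\<^sup>2))"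
        unfolding B_def by (rule H.Hoeffding_ineq_le[OF eps_nn]) (use Cpos n_pos in simp)
      also have "-2 * \<epsilon>\<^sup>2 / (\<Sum>j\<in>{..<n}. (C - 0)\<^sup>2) = ln \<delta>1"
      proof -
        have "\<epsilon>\<^sup>2 = real n ^ 2 * C ^ 2 * (ln (1 / \<delta>1) / (2 * real n))"
          unfolding \<epsilon>_def using lnd1 n_pos by (simp add: power_mult_distrib)
        then show ?thesis unfolding sumsq using Cpos n_pos d1pos
          by (simp add: field_simps power2_eq_square ln_div)
      qed
      also have "exp (ln \<delta>1) = \<delta>1" using d1pos by simp
      finally have PB: "M.prob B \<le> \<delta>1" .
      have B_m: "B \<in> sets M" unfolding B_def
        using borel_measurable_le[OF borel_measurable_sum[OF Xm] borel_measurable_const] by auto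
      have sub: "space M - B \<subseteq> E"
      proof
        fix s assume s: "s \<in> space M - B"
        then have lt: "\<mu> - \<epsilon> < (\<Sum>j\<in>{..<n}. loss h (s j))" unfolding B_def by auto
        have mu: "\<mu> = real n * pop_risk P loss h" unfolding \<mu>_def using expX by simp
        have "pop_risk P loss h = \<mu> / real n" using mu n_pos by simp
        also have "\<dots> \<le> (\<Sum>j\<in>{..<n}. loss h (s j)) / real n + \<epsilon> / real n"
          using lt n_pos by (simp add: field_simps)
        also have "\<epsilon> / real n = C * sqrt (ln (1 / \<delta>1) / (2 * real n))"
          unfolding \<epsilon>_def using n_pos by simp
        also have "(\<Sum>j\<in>{..<n}. loss h (s j)) / real n = emp_risk n s loss h"
          unfolding emp_risk_def by simp
        finally show "s \<in> E" unfolding E_def using s sq_le g_nn[of "card (hit_cells n s K Zs)"] by auto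
      qed
      have "1 - \<delta>1 \<le> M.prob (space M - B)" using M.prob_compl[OF B_m] PB by simp
      also have "\<dots> \<le> M.prob E" using sub E_m by (intro M.finite_measure_mono) auto
      finally show ?thesis unfolding goal_eq using delta2 by simp
    qed
  qed
qed

end
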